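(* $C_3(22) = 9$.
   Context: For positive integers $m, r$, $C_m(r)$ is the minimum odd positive integer $n$ such that there exist vectors $v_1, \ldots, v_n \in \mathbb{Z}^m$ (not necessarily distinct) with $|v_i| = \sqrt{r}$ (Euclidean norm) for every $i$ and $v_1 + \cdots + v_n = \mathbf{0}$; if no such odd $n$ exists, $C_m(r) = 0$. *)

theory Defs
  imports Complex_Main
begin

definition zero_sum_family :: "nat \<Rightarrow> nat \<Rightarrow> nat \<Rightarrow> bool" where
  "zero_sum_family m r n \<longleftrightarrow>
     (\<exists>vs :: int list list.
        length vs = n \<and>
        (\<forall>v \<in> set vs. length v = m \<and>
            sqrt (real_of_int (\<Sum>x\<leftarrow>v. x ^ 2)) = sqrt (real r)) \<and>
        (\<forall>i < m. (\<Sum>v\<leftarrow>vs. v ! i) = 0))"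

definition C :: "nat \<Rightarrow> nat \<Rightarrow> nat" where
  "C m r = (if \<exists>n. n > 0 \<and> odd n \<and> zero_sum_family m r n
            then (LEAST n. n > 0 \<and> odd n \<and> zero_sum_family m r n)
            else 0)"

end

theory Submission
  imports Defs
begin

lemma sq_cases:
  fixes a :: int
  assumes "a^2 \<le> 22"
  shows "a \<in> {-4,-3,-2,-1,0,1,2,3,4}"
proof -
  have "\<bar>a\<bar> < 5"
  proof (rule ccontr)
    assume "\<not> \<bar>a\<bar> < 5"
    hence "5 * 5 \<le> \<bar>a\<bar> * \<bar>a\<bar>" by (intro mult_mono) auto
    thus False using assms by (simp add: power2_eq_square)
  qed
  thus ?thesis by auto
qed

lemma sq4: fixes x :: int assumes "x^2 = 4" shows "x = 2 \<or> x = -2"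
proof -
  have "x \<in> {-4,-3,-2,-1,0,1,2,3,4}" using assms by (intro sq_cases) simp
  thus ?thesis using assms by (elim insertE emptyE; simp)
qed

lemma sq9: fixes x :: int assumes "x^2 = 9" shows "x = 3 \<or> x = -3"
proof -
  have "x \<in> {-4,-3,-2,-1,0,1,2,3,4}" using assms by (intro sq_cases) simp
  thus ?thesis using assms by (elim insertE emptyE; simp)
qed

lemma sqv: fixes x :: int assumes "x^2 \<le> 22" shows "x^2 \<in> {0,1,4,9,16}"
proof -
  have "x \<in> {-4,-3,-2,-1,0,1,2,3,4}" using assms by (intro sq_cases) simp
  thus ?thesis by (elim insertE emptyE; simp)
qed

lemma sum3: fixes A B C :: int
  assumes "A \<in> {0,1,4,9,16}" "B \<in> {0,1,4,9,16}" "C \<in> {0,1,4,9,16}" "A + B + C = 22"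
  shows "(A=4 \<and> B=9 \<and> C=9) \<or> (A=9 \<and> B=4 \<and> C=9) \<or> (A=9 \<and> B=9 \<and> C=4)"
  using assms by (elim insertE emptyE; simp)

lemma vec22:
  fixes a b c :: int
  assumes "a^2 + b^2 + c^2 = 22"
  shows "a \<in> {-3,-2,2,3} \<and> b \<in> {-3,-2,2,3} \<and> c \<in> {-3,-2,2,3} \<and>
         (if even a then 1 else 0) + (if even b then 1 else 0) + (if even c then 1 else (0::nat)) = 1"
proof -
  have "a^2 \<le> 22" "b^2 \<le> 22" "c^2 \<le> 22" using assms by (smt (verit) zero_le_power2)+
  hence "a^2 \<in> {0,1,4,9,16}" "b^2 \<in> {0,1,4,9,16}" "c^2 \<in> {0,1,4,9,16}" using sqv by blast+
  from sum3[OF this assms] show ?thesis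
    using sq4[of a] sq4[of b] sq4[of c] sq9[of a] sq9[of b] sq9[of c] by auto
qed

lemma parity_sum:
  fixes xs :: "int list"
  shows "even (sum_list xs) = even (length (filter odd xs))"
  by (induction xs) auto

lemma mod3_sum:
  fixes xs :: "int list"
  assumes "\<forall>x\<in>set xs. x \<in> {-3,-2,2,3}"
  shows "3 dvd (sum_list xs - sum_list (filter even xs))"
  using assms
proof (induction xs)
  case Nil thus ?case by simp
next
  case (Cons x xs)
  hence IH: "3 dvd (sum_list xs - sum_list (filter even xs))" by simp
  have "x \<in> {-3,-2,2,3}" using Cons.prems by simp
  then have hx: "3 dvd (x - (if even x then x else 0))" by auto
  have eq: "sum_list (x#xs) - sum_list (filter even (x#xs)) = (x - (if even x then x else 0)) + (sum_list xs - sum_list (filter even xs))" by simp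
  from dvd_add[OF hx IH] show ?case by (subst eq)
qed

lemma coord_bound:
  fixes xs :: "int list"
  assumes "\<forall>x\<in>set xs. x \<in> {-3,-2,2,3}" "sum_list xs = 0" "odd (length xs)"
  shows "length (filter even xs) \<ge> 3"
proof -
  have e: "even (length (filter odd xs))" using parity_sum[of xs] assms(2) by simp
  have l: "length (filter even xs) + length (filter (\<lambda>x. \<not> even x) xs) = length xs"
    by (rule sum_length_filter_compl)
  hence o: "odd (length (filter even xs))" using e assms(3) by (metis even_add)
  have d: "3 dvd sum_list (filter even xs)" using mod3_sum[OF assms(1)] assms(2) by simp
  show ?thesis
  proof (rule ccontr)
    assume "\<not> ?thesis"
    moreover obtain k where "length (filter even xs) = 2*k+1" using o by (metis oddE)
    ultimately have "length (filter even xs) = 1" by presburger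
    then obtain y where y: "filter even xs = [y]" by (auto simp: length_Suc_conv)
    hence "y \<in> set (filter even xs)" by simp
    hence "y \<in> set xs" "even y" by auto
    hence "y \<in> {-2,2}" using assms(1) by auto
    thus False using d y by auto
  qed
qed

lemma count_coords:
  fixes vs :: "int list list"
  assumes "\<forall>v\<in>set vs. (if even (v!0) then 1 else 0) + (if even (v!1) then 1 else 0) + (if even (v!2) then 1 else (0::nat)) = 1"
  shows "length vs = length (filter even (map (\<lambda>v. v!0) vs)) + length (filter even (map (\<lambda>v. v!1) vs))
     + length (filter even (map (\<lambda>v. v!2) vs))"
  using assms
proof (induction vs)
  case Nil thus ?case by simp
next
  case (Cons v vs)
  hence IH: "length vs = length (filter even (map (\<lambda>v. v!0) vs)) + length (filter even (map (\<lambda>v. v!1) vs))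
     + length (filter even (map (\<lambda>v. v!2) vs))" by simp
  have "(if even (v!0) then 1 else 0) + (if even (v!1) then 1 else 0) + (if even (v!2) then 1 else (0::nat)) = 1"
    using Cons.prems by simp
  thus ?case using IH
    by (cases "even (v!0)"; cases "even (v!1)"; cases "even (v!2)"; simp only: list.map filter.simps list.size if_True if_False; linarith)
qed

lemma lower:
  assumes "zero_sum_family 3 22 n" "odd n"
  shows "n \<ge> 9"
proof -
  obtain vs :: "int list list" where len: "length vs = n" and
    V: "\<forall>v \<in> set vs. length v = 3 \<and> sqrt (real_of_int (\<Sum>x\<leftarrow>v. x ^ 2)) = sqrt (real 22)" and
    S: "\<forall>i < 3. (\<Sum>v\<leftarrow>vs. v ! i) = 0"
    using assms(1) unfolding zero_sum_family_def by blast
  have P: "v!0 \<in> {-3,-2,2,3} \<and> v!1 \<in> {-3,-2,2,3} \<and> v!2 \<in> {-3,-2,2,3} \<and>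
         (if even (v!0) then 1 else 0) + (if even (v!1) then 1 else 0) + (if even (v!2) then 1 else (0::nat)) = 1"
    if "v \<in> set vs" for v
  proof -
    have "length v = 3" and q: "sqrt (real_of_int (\<Sum>x\<leftarrow>v. x ^ 2)) = sqrt (real 22)" using V that by auto
    then obtain a b c where v: "v = [a,b,c]"
      by (auto simp: numeral_3_eq_3 length_Suc_conv)
    have "real_of_int (\<Sum>x\<leftarrow>v. x ^ 2) = 22" using q by simp
    hence "(\<Sum>x\<leftarrow>v. x ^ 2) = 22" by linarith
    hence "a^2 + b^2 + c^2 = 22" using v by simp
    from vec22[OF this] show ?thesis using v by simp
  qed
  have E: "length (filter even (map (\<lambda>v. v!i) vs)) \<ge> 3" if "i < 3" for i
  proof (rule coord_bound)
    show "\<forall>x\<in>set (map (\<lambda>v. v ! i) vs). x \<in> {- 3, - 2, 2, 3}"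
    proof
      fix x assume "x \<in> set (map (\<lambda>v. v ! i) vs)"
      then obtain v where v: "v \<in> set vs" "x = v ! i" by auto
      have "i = 0 \<or> i = 1 \<or> i = 2" using that by auto
      thus "x \<in> {- 3, - 2, 2, 3}" using P[OF v(1)] v(2) by (elim disjE) simp_all
    qed
    show "sum_list (map (\<lambda>v. v ! i) vs) = 0" using S that by simp
    show "odd (length (map (\<lambda>v. v ! i) vs))" using len assms(2) by simp
  qed
  have "length vs = length (filter even (map (\<lambda>v. v!0) vs)) + length (filter even (map (\<lambda>v. v!1) vs))
     + length (filter even (map (\<lambda>v. v!2) vs))"
    using P by (intro count_coords) auto
  moreover have "length (filter even (map (\<lambda>v. v!0) vs)) \<ge> 3" "length (filter even (map (\<lambda>v. v!1) vs)) \<ge> 3"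
     "length (filter even (map (\<lambda>v. v!2) vs)) \<ge> 3" using E by auto
  ultimately show ?thesis using len by linarith
qed

lemma witness: "zero_sum_family 3 22 9"
  unfolding zero_sum_family_def
proof (intro exI conjI)
  let ?vs = "[[-3,-3,-2],[-3,-3,-2],[-3,-3,-2],[-3,2,-3],[2,-3,-3],[2,3,3],[2,3,3],[3,2,3],[3,2,3]] :: int list list"
  show "length ?vs = 9" by simp
  show "\<forall>v\<in>set ?vs. length v = 3 \<and> sqrt (real_of_int (\<Sum>x\<leftarrow>v. x ^ 2)) = sqrt (real 22)" by simp
  show "\<forall>i<3. (\<Sum>v\<leftarrow>?vs. v ! i) = 0"
    by (auto simp: less_Suc_eq numeral_3_eq_3)
qed

theorem theorem4:
  shows "C 3 22 = 9"
proof -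
  have ex: "\<exists>n. n > 0 \<and> odd n \<and> zero_sum_family 3 22 n" using witness by (intro exI[of _ 9]) auto
  have "(LEAST n. n > 0 \<and> odd n \<and> zero_sum_family 3 22 n) = (9::nat)"
    by (rule Least_equality) (use witness lower in auto)
  thus ?thesis using ex unfolding C_def by simp
qed

end
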